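(* Let $\alpha,\beta\in\mathbb{R}$ with $\beta-\alpha-2\neq0$, and set $\mathbf C_{\alpha,\beta}=\frac{(\beta-3)(2\alpha-\beta+1)}{4}$. For every $f\in C_0^\infty((0,\infty))$ (complex-valued), with $f^\#(r)=f''(r)+\frac{\beta-2}{r}f'(r)+\frac{(\beta-3)^2}{4r^2}f(r)$, \[ \left\|\frac{f'}{r}+\frac{\beta-3}{2r^2}f\right\|_{L^2_\beta}^2=\frac{1}{(\beta-\alpha-2)^2}\left\|\mathfrak L_\alpha f+\mathbf C_{\alpha,\beta}\frac{f}{r^2}\right\|_{L^2_\beta}^2-\frac{1}{(\beta-\alpha-2)^2}\left\|f^\#\right\|_{L^2_\beta}^2 . \]
   Context: For $\beta\in\mathbb{R}$, $L^2_\beta$ denotes the weighted space on $(0,\infty)$ with norm $\|g\|_{L^2_\beta}^2=\int_0^\infty |g(r)|^2 r^\beta\,dr$. For $\alpha\in\mathbb{R}$, $\mathfrak L_\alpha$ is the operator $\mathfrak L_\alpha f(r)=f''(r)+\frac{\alpha}{r}f'(r)$. Expressions such as $f/r^2$ denote the function $r\mapsto f(r)/r^2$. *)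

theory Defs
  imports "HOL-Analysis.Analysis"
begin

definition D :: "(real \<Rightarrow> complex) \<Rightarrow> real \<Rightarrow> complex" where
  "D f = (\<lambda>r. vector_derivative f (at r))"

definition C0inf :: "(real \<Rightarrow> complex) set" where
  "C0inf = {f. (\<forall>n x. ((D ^^ n) f differentiable at x)) \<and>
               (\<exists>a b. 0 < a \<and> a \<le> b \<and> (\<forall>x. x \<notin> {a..b} \<longrightarrow> f x = 0))}"

definition L2w_sq :: "real \<Rightarrow> (real \<Rightarrow> complex) \<Rightarrow> real" where
  "L2w_sq \<beta> g = (LINT r:{0<..}|lborel. (cmod (g r))\<^sup>2 * r powr \<beta>)"

definition Lop :: "real \<Rightarrow> (real \<Rightarrow> complex) \<Rightarrow> real \<Rightarrow> complex" where
  "Lop \<alpha> f = (\<lambda>r. D (D f) r + of_real (\<alpha> / r) * D f r)"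

end

theory Submission
  imports Defs
begin

lemma conv_int:
  fixes F :: "real \<Rightarrow> real"
  assumes "0 < a" "continuous_on {a..b} F" "\<And>r. 0 < r \<Longrightarrow> r \<notin> {a..b} \<Longrightarrow> F r = 0"
  shows "(LINT r:{0<..}|lborel. F r) = integral {a..b} F"
proof -
  have "(LINT r:{0<..}|lborel. F r) = (LINT r:{a..b}|lborel. F r)"
    unfolding set_lebesgue_integral_def
    by (rule Bochner_Integration.integral_cong) (use assms in \<open>auto simp: indicator_def\<close>)
  also have "\<dots> = integral {a..b} F"
    by (rule set_borel_integral_eq_integral(2)[OF borel_integrable_atLeastAtMost'[OF assms(2)]])
  finally show ?thesis .
qed

lemma D_zero:
  assumes "open S" "x \<in> S" "\<And>y. y \<in> S \<Longrightarrow> g y = 0"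
  shows "D g x = 0"
proof -
  have "(g has_vector_derivative 0) (at x)"
    by (rule has_vector_derivative_transform_within_open[of "\<lambda>_. 0" 0 x S])
       (use assms in \<open>auto intro: has_vector_derivative_const\<close>)
  then show ?thesis unfolding D_def by (rule vector_derivative_at)
qed

lemma sq_expand:
  fixes B A :: complex and c :: real
  shows "(cmod (B - of_real c * A))\<^sup>2 = (cmod B)\<^sup>2 - 2 * c * Re (B * cnj A) + c\<^sup>2 * (cmod A)\<^sup>2"
  unfolding cmod_power2 by (simp add: power2_eq_square algebra_simps)

lemma Aeq_gen: "(\<lambda>r. g r / of_real r + of_real ((\<beta> - 3) / (2 * r\<^sup>2)) * (h r::complex)) = (\<lambda>r. of_real (1 / r) * g r + of_real ((\<beta> - 3) / (2 * r\<^sup>2)) * h r)"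
proof (rule ext)
  fix r :: real
  have "g r / of_real r = of_real (1 / r) * g r" by (simp add: divide_inverse mult.commute)
  then show "g r / of_real r + of_real ((\<beta> - 3) / (2 * r\<^sup>2)) * (h r::complex) = of_real (1 / r) * g r + of_real ((\<beta> - 3) / (2 * r\<^sup>2)) * h r" by simp
qed

lemma E1_gen: fixes x y z :: complex and r :: real assumes "r > 0" shows "(of_real (1 / r) * x + of_real (- 1 / r^2) * y
        + (of_real ((\<beta> - 3) / (2 * r\<^sup>2)) * y + of_real (- (\<beta> - 3) / r^3) * z)) = 
 x / of_real r - y / of_real (r^2)
      + of_real ((\<beta> - 3) / (2 * r\<^sup>2)) * y - of_real ((\<beta> - 3) / r^3) * z"
  using assms by (simp add: field_simps)

lemma fin_alg:
  fixes u v q p c :: real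
  assumes "c \<noteq> 0"
  shows "u * p = 1 / c\<^sup>2 * ((v - 2 * c * q + c\<^sup>2 * u) * p) - 1 / c\<^sup>2 * (v * p) + 2 / c * (p * q)"
  using assms by (simp add: field_simps power2_eq_square)

lemma idB:
  fixes f0 f1 f2 :: complex and r \<beta> :: real
  assumes "r > 0"
  shows "f2 + of_real ((\<beta> - 2) / r) * f1 + of_real ((\<beta> - 3)\<^sup>2 / (4 * r\<^sup>2)) * f0
    = of_real r * (f2 / of_real r - f1 / of_real (r^2) + of_real ((\<beta> - 3) / (2 * r\<^sup>2)) * f1
                   - of_real ((\<beta> - 3) / r^3) * f0)
      + of_real ((\<beta> + 1) / 2) * (f1 / of_real r + of_real ((\<beta> - 3) / (2 * r\<^sup>2)) * f0)"
  using assms by (simp add: field_simps power2_eq_square power3_eq_cube) 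

lemma idL:
  fixes f0 f1 f2 :: complex and r \<alpha> \<beta> :: real
  assumes "r > 0"
  shows "f2 + of_real (\<alpha> / r) * f1 + of_real ((\<beta> - 3) * (2 * \<alpha> - \<beta> + 1) / 4) * f0 / of_real (r\<^sup>2)
    = (f2 + of_real ((\<beta> - 2) / r) * f1 + of_real ((\<beta> - 3)\<^sup>2 / (4 * r\<^sup>2)) * f0)
      - of_real (\<beta> - \<alpha> - 2) * (f1 / of_real r + of_real ((\<beta> - 3) / (2 * r\<^sup>2)) * f0)"
  using assms by (simp add: field_simps power2_eq_square)

lemma idQ:
  fixes A A' B :: complex and r p \<beta> :: real
  assumes "B = of_real r * A' + of_real ((\<beta> + 1) / 2) * A"
  shows "of_real (p * r) * (A * cnj A' + A' * cnj A) + of_real ((\<beta> + 1) * p) * (A * cnj A)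
     = 2 * of_real (p * Re (B * cnj A))"
proof -
  have e: "B * cnj A + cnj (B * cnj A) = of_real (2 * Re (B * cnj A))"
    by (rule complex_add_cnj)
  have "2 * of_real (p * Re (B * cnj A)) = of_real p * (B * cnj A + cnj (B * cnj A))"
    unfolding e by simp
  also have "\<dots> = of_real (p * r) * (A * cnj A' + A' * cnj A) + of_real ((\<beta> + 1) * p) * (A * cnj A)"
    unfolding assms by (simp add: algebra_simps)
  finally show ?thesis by simp
qed

theorem mainTheorem7:
  fixes \<alpha> \<beta> :: real and f :: "real \<Rightarrow> complex"
  assumes "\<beta> - \<alpha> - 2 \<noteq> 0"
    and "f \<in> C0inf"
  shows "L2w_sq \<beta> (\<lambda>r. D f r / of_real r + of_real ((\<beta> - 3) / (2 * r\<^sup>2)) * f r)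
       = 1 / (\<beta> - \<alpha> - 2)\<^sup>2 *
           L2w_sq \<beta> (\<lambda>r. Lop \<alpha> f r + of_real ((\<beta> - 3) * (2 * \<alpha> - \<beta> + 1) / 4) * f r / of_real (r\<^sup>2))
         - 1 / (\<beta> - \<alpha> - 2)\<^sup>2 *
           L2w_sq \<beta> (\<lambda>r. D (D f) r + of_real ((\<beta> - 2) / r) * D f r
                         + of_real ((\<beta> - 3)\<^sup>2 / (4 * r\<^sup>2)) * f r)"
proof -
  define c where "c = \<beta> - \<alpha> - 2"
  have c0: "c \<noteq> 0" using assms(1) c_def by simp
  obtain a b where ab: "0 < a" "a \<le> b" and fz: "\<And>x. x \<notin> {a..b} \<Longrightarrow> f x = 0"
    using assms(2) unfolding C0inf_def by blast
  have dif: "\<And>n x. (D ^^ n) f differentiable at x" using assms(2) unfolding C0inf_def by blast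
  have d0: "\<And>x. f differentiable at x" using dif[of 0] by simp
  have d1: "\<And>x. D f differentiable at x" using dif[of 1] by simp
  have d2: "\<And>x. D (D f) differentiable at x" using dif[of 2] by (simp add: numeral_2_eq_2)
  have hd0: "\<And>x. (f has_vector_derivative D f x) (at x)"
    using d0 unfolding D_def by (simp add: vector_derivative_works[symmetric])
  have hd1: "\<And>x. (D f has_vector_derivative D (D f) x) (at x)"
    using d1 unfolding D_def[of "D f"] by (simp add: vector_derivative_works[symmetric])
  have cf0: "continuous_on S f" for S
    using d0 by (meson continuous_at_imp_continuous_on differentiable_imp_continuous_within)
  have cf1: "continuous_on S (D f)" for S
    using d1 by (meson continuous_at_imp_continuous_on differentiable_imp_continuous_within)
  have cf2: "continuous_on S (D (D f))" for S
    using d2 by (meson continuous_at_imp_continuous_on differentiable_imp_continuous_within)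
  have oS: "open (- {a..b})" by auto
  have z1: "D f x = 0" if "x \<notin> {a..b}" for x
    by (rule D_zero[OF oS]) (use that fz in auto)
  have z2: "D (D f) x = 0" if "x \<notin> {a..b}" for x
    by (rule D_zero[OF oS]) (use that z1 in auto)
  define a' where "a' = a / 2"
  define b' where "b' = b + 1"
  have a'b': "0 < a'" "a' \<le> b'" "a' \<notin> {a..b}" "b' \<notin> {a..b}"
    using ab by (auto simp: a'_def b'_def)
  have sub: "x \<notin> {a'..b'} \<Longrightarrow> x \<notin> {a..b}" for x using ab by (auto simp: a'_def b'_def)
  define A where "A = (\<lambda>r. D f r / of_real r + of_real ((\<beta> - 3) / (2 * r\<^sup>2)) * f r)"
  define A' where "A' = (\<lambda>r. D (D f) r / of_real r - D f r / of_real (r^2)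
      + of_real ((\<beta> - 3) / (2 * r\<^sup>2)) * D f r - of_real ((\<beta> - 3) / r^3) * f r)"
  define B where "B = (\<lambda>r. D (D f) r + of_real ((\<beta> - 2) / r) * D f r
                         + of_real ((\<beta> - 3)\<^sup>2 / (4 * r\<^sup>2)) * f r)"
  define L where "L = (\<lambda>r. Lop \<alpha> f r + of_real ((\<beta> - 3) * (2 * \<alpha> - \<beta> + 1) / 4) * f r / of_real (r\<^sup>2))"
  have LB: "L r = B r - of_real c * A r" if "r > 0" for r
    unfolding L_def B_def A_def Lop_def c_def using idL[OF that] by simp
  have BA: "B r = of_real r * A' r + of_real ((\<beta> + 1) / 2) * A r" if "r > 0" for r
    unfolding B_def A_def A'_def using idB[OF that] by simp
  have Az: "A r = 0" "B r = 0" "L r = 0" if "r \<notin> {a..b}" for r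
    using that fz z1 z2 by (auto simp: A_def B_def L_def Lop_def)
  have dA: "(A has_vector_derivative A' r) (at r)" if "r > 0" for r
  proof -
    have Aeq: "A = (\<lambda>r. of_real (1 / r) * D f r + of_real ((\<beta> - 3) / (2 * r\<^sup>2)) * f r)"
      unfolding A_def by (rule Aeq_gen)
    have h1: "((\<lambda>r. 1 / r) has_real_derivative (- 1 / r^2)) (at r)"
      using that by (auto intro!: derivative_eq_intros simp: power2_eq_square)
    have h2: "((\<lambda>r. (\<beta> - 3) / (2 * r\<^sup>2)) has_real_derivative (- (\<beta> - 3) / r^3)) (at r)"
      using that by (auto intro!: derivative_eq_intros simp: power2_eq_square power3_eq_cube field_simps)
    have D1: "((\<lambda>r. of_real (1 / r) * D f r + of_real ((\<beta> - 3) / (2 * r\<^sup>2)) * f r) has_vector_derivative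
       (of_real (1 / r) * D (D f) r + of_real (- 1 / r^2) * D f r
        + (of_real ((\<beta> - 3) / (2 * r\<^sup>2)) * D f r + of_real (- (\<beta> - 3) / r^3) * f r))) (at r)"
      apply (rule has_vector_derivative_add)
       apply (rule has_vector_derivative_mult[OF has_vector_derivative_of_real[OF h1] hd1])
      apply (rule has_vector_derivative_mult[OF has_vector_derivative_of_real[OF h2] hd0])
      done
    have E1: "(of_real (1 / r) * D (D f) r + of_real (- 1 / r^2) * D f r
        + (of_real ((\<beta> - 3) / (2 * r\<^sup>2)) * D f r + of_real (- (\<beta> - 3) / r^3) * f r)) = A' r"
      unfolding A'_def by (rule E1_gen[OF that])
    show ?thesis unfolding Aeq by (rule has_vector_derivative_eq_rhs[OF D1 E1])
  qed
  define F where "F = (\<lambda>r. r powr \<beta> * Re (B r * cnj (A r)))"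
  define Q where "Q = (\<lambda>r. of_real (r powr (\<beta> + 1)) * (A r * cnj (A r)) / 2)"
  have dQ: "(Q has_vector_derivative of_real (F r)) (at r)" if "r > 0" for r
  proof -
    have P: "((\<lambda>r. r powr (\<beta>+1)) has_real_derivative (\<beta>+1) * r powr \<beta>) (at r)"
      using has_real_derivative_powr[OF that, of "\<beta>+1"] by simp
    have D1: "(Q has_vector_derivative (of_real (r powr (\<beta>+1)) * (A r * cnj (A' r) + A' r * cnj (A r))
        + of_real ((\<beta>+1) * r powr \<beta>) * (A r * cnj (A r))) / 2) (at r)"
      unfolding Q_def
      apply (rule has_vector_derivative_divide)
      apply (rule has_vector_derivative_mult[OF has_vector_derivative_of_real[OF P]
               has_vector_derivative_mult[OF dA[OF that] has_vector_derivative_cnj[OF dA[OF that]]]])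
      done
    have pw: "r powr (\<beta>+1) = r powr \<beta> * r" using that by (simp add: powr_add)
    have E: "(of_real (r powr (\<beta>+1)) * (A r * cnj (A' r) + A' r * cnj (A r))
        + of_real ((\<beta>+1) * r powr \<beta>) * (A r * cnj (A r))) / 2 = of_real (F r)"
      unfolding pw idQ[OF BA[OF that], of "r powr \<beta>"] F_def by simp
    show ?thesis by (rule has_vector_derivative_eq_rhs[OF D1 E])
  qed
  have pos: "r > 0" if "r \<in> {a'..b'}" for r using that a'b'(1) by auto
  have contA: "continuous_on {a'..b'} A"
    unfolding A_def using pos a'b'(1) by (auto intro!: continuous_intros cf0 cf1)
  have contB: "continuous_on {a'..b'} B"
    unfolding B_def using pos a'b'(1) by (auto intro!: continuous_intros cf0 cf1 cf2)
  have contL: "continuous_on {a'..b'} L"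
    unfolding L_def Lop_def using pos a'b'(1) by (auto intro!: continuous_intros cf0 cf1 cf2)
  have contw: "continuous_on {a'..b'} (\<lambda>r. r powr \<beta>)"
    using pos a'b'(1) by (auto intro!: continuous_intros)
  have cN: "continuous_on {a'..b'} (\<lambda>r. (cmod (X r))\<^sup>2 * r powr \<beta>)"
    if "continuous_on {a'..b'} X" for X :: "real \<Rightarrow> complex"
    by (intro continuous_intros that contw)
  have cF: "continuous_on {a'..b'} F"
    unfolding F_def by (intro continuous_intros contw contA contB)
  have IF: "integral {a'..b'} F = 0"
  proof -
    have "((\<lambda>x. complex_of_real (F x)) has_integral (Q b' - Q a')) {a'..b'}"
      by (rule fundamental_theorem_of_calculus[OF a'b'(2)])
         (rule has_vector_derivative_at_within[OF dQ], use pos in auto)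
    moreover have "Q a' = 0" "Q b' = 0"
      using Az(1)[OF a'b'(3)] Az(1)[OF a'b'(4)] by (auto simp: Q_def)
    ultimately have "((\<lambda>x. complex_of_real (F x)) has_integral 0) {a'..b'}" by simp
    then have "((\<lambda>x. Re (complex_of_real (F x))) has_integral Re 0) {a'..b'}" by (rule has_integral_Re)
    then have "(F has_integral 0) {a'..b'}" by simp
    then show ?thesis by (rule integral_unique)
  qed
  have conv: "L2w_sq \<beta> X = integral {a'..b'} (\<lambda>r. (cmod (X r))\<^sup>2 * r powr \<beta>)"
    if "continuous_on {a'..b'} X" "\<And>r. r \<notin> {a..b} \<Longrightarrow> X r = 0" for X :: "real \<Rightarrow> complex"
    unfolding L2w_sq_def
    by (rule conv_int[OF a'b'(1) cN[OF that(1)]]) (use that(2) sub in auto)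
  have pw: "(cmod (A r))\<^sup>2 * r powr \<beta> = 1 / c\<^sup>2 * ((cmod (L r))\<^sup>2 * r powr \<beta>)
      - 1 / c\<^sup>2 * ((cmod (B r))\<^sup>2 * r powr \<beta>) + 2 / c * F r" if "r \<in> {a'..b'}" for r
    unfolding LB[OF pos[OF that]] sq_expand F_def by (rule fin_alg[OF c0])
  have "integral {a'..b'} (\<lambda>r. (cmod (A r))\<^sup>2 * r powr \<beta>)
     = integral {a'..b'} (\<lambda>r. 1 / c\<^sup>2 * ((cmod (L r))\<^sup>2 * r powr \<beta>)
      - 1 / c\<^sup>2 * ((cmod (B r))\<^sup>2 * r powr \<beta>) + 2 / c * F r)"
    by (rule integral_cong) (rule pw)
  also have "\<dots> = 1 / c\<^sup>2 * integral {a'..b'} (\<lambda>r. (cmod (L r))\<^sup>2 * r powr \<beta>)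
      - 1 / c\<^sup>2 * integral {a'..b'} (\<lambda>r. (cmod (B r))\<^sup>2 * r powr \<beta>) + 2 / c * integral {a'..b'} F"
    apply (subst integral_add)
      apply (rule integrable_continuous_interval, rule continuous_on_diff)
       apply (rule continuous_on_mult[OF continuous_on_const cN[OF contL]])
      apply (rule continuous_on_mult[OF continuous_on_const cN[OF contB]])
     apply (rule integrable_continuous_interval, rule continuous_on_mult[OF continuous_on_const cF])
    apply (subst integral_diff)
      apply (rule integrable_continuous_interval, rule continuous_on_mult[OF continuous_on_const cN[OF contL]])
     apply (rule integrable_continuous_interval, rule continuous_on_mult[OF continuous_on_const cN[OF contB]])
    apply simp
    done
  finally have eq: "L2w_sq \<beta> A = 1 / c\<^sup>2 * L2w_sq \<beta> L - 1 / c\<^sup>2 * L2w_sq \<beta> B"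
    using conv[OF contA Az(1)] conv[OF contB Az(2)] conv[OF contL Az(3)] IF by simp
  show ?thesis using eq unfolding A_def B_def L_def c_def .
qed

end
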